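(* Let $f:E\to X$ be a fibrewise pointed map over $B$. Then $\mathrm{secat}_B(f)\le\mathrm{cat}^*_B(X)$. If moreover $E$ is fibrewise contractible, then $\mathrm{secat}_B(f)=\mathrm{cat}^*_B(X)$.
   Context: Fibrewise space over $B$: a space $X$ with a map $p_X:X\to B$; fibrewise map: $p_Yf=p_X$; fibrewise pointed space: with a section $s_X$ of $p_X$; fibrewise pointed map: fibrewise map with $fs_E=s_X$. Fibrewise homotopy: $H:X\times[0,1]\to Y$ with $p_Y(H(x,t))=p_X(x)$ ($\simeq_B$). A fibrewise space is fibrewise contractible if it is fibrewise homotopy equivalent to $B$ (with projection $\mathrm{id}_B$). $\mathrm{secat}_B(f)$: least $n$ such that $X$ is covered by $n+1$ open sets $U$ each with a fibrewise map $s:U\to E$, $fs\simeq_B$ the inclusion $U\hookrightarrow X$. $\mathrm{cat}^*_B(X)$: least $n$ such that $X$ is covered by $n+1$ open sets $U_i$ with inclusion $U_i\hookrightarrow X$ fibrewise homotopic to $s_X\circ p_X|_{U_i}$. Both $\infty$ if no such $n$. *)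

theory Defs
  imports "HOL-Analysis.Analysis" "HOL-Library.Extended_Nat"
begin

definition fibrewise_space :: "'b topology \<Rightarrow> 'x topology \<Rightarrow> ('x \<Rightarrow> 'b) \<Rightarrow> bool" where
  "fibrewise_space B X p \<longleftrightarrow> continuous_map X B p"

definition fibrewise_pointed_space ::
  "'b topology \<Rightarrow> 'x topology \<Rightarrow> ('x \<Rightarrow> 'b) \<Rightarrow> ('b \<Rightarrow> 'x) \<Rightarrow> bool" where
  "fibrewise_pointed_space B X p s \<longleftrightarrow>
     fibrewise_space B X p \<and> continuous_map B X s \<and> (\<forall>b\<in>topspace B. p (s b) = b)"

definition fibrewise_map ::
  "'x topology \<Rightarrow> ('x \<Rightarrow> 'b) \<Rightarrow> 'y topology \<Rightarrow> ('y \<Rightarrow> 'b) \<Rightarrow> ('x \<Rightarrow> 'y) \<Rightarrow> bool" where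
  "fibrewise_map X pX Y pY f \<longleftrightarrow>
     continuous_map X Y f \<and> (\<forall>x\<in>topspace X. pY (f x) = pX x)"

definition fibrewise_pointed_map ::
  "'b topology \<Rightarrow> 'x topology \<Rightarrow> ('x \<Rightarrow> 'b) \<Rightarrow> ('b \<Rightarrow> 'x)
     \<Rightarrow> 'y topology \<Rightarrow> ('y \<Rightarrow> 'b) \<Rightarrow> ('b \<Rightarrow> 'y) \<Rightarrow> ('x \<Rightarrow> 'y) \<Rightarrow> bool" where
  "fibrewise_pointed_map B X pX sX Y pY sY f \<longleftrightarrow>
     fibrewise_map X pX Y pY f \<and> (\<forall>b\<in>topspace B. f (sX b) = sY b)"

definition fibrewise_homotopic ::
  "'x topology \<Rightarrow> ('x \<Rightarrow> 'b) \<Rightarrow> 'y topology \<Rightarrow> ('y \<Rightarrow> 'b) \<Rightarrow> ('x \<Rightarrow> 'y) \<Rightarrow> ('x \<Rightarrow> 'y) \<Rightarrow> bool" where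
  "fibrewise_homotopic X pX Y pY g h \<longleftrightarrow>
     homotopic_with (\<lambda>k. \<forall>x\<in>topspace X. pY (k x) = pX x) X Y g h"

definition fibrewise_contractible :: "'b topology \<Rightarrow> 'e topology \<Rightarrow> ('e \<Rightarrow> 'b) \<Rightarrow> bool" where
  "fibrewise_contractible B E pE \<longleftrightarrow>
     (\<exists>g h. fibrewise_map E pE B id g \<and> fibrewise_map B id E pE h \<and>
            fibrewise_homotopic E pE E pE (h \<circ> g) id \<and>
            fibrewise_homotopic B id B id (g \<circ> h) id)"

text \<open>Fibrewise sectional category of f : E \<rightarrow> X (value \<infinity> if no finite cover exists).\<close>
definition secat_B ::
  "'e topology \<Rightarrow> ('e \<Rightarrow> 'b) \<Rightarrow> 'x topology \<Rightarrow> ('x \<Rightarrow> 'b) \<Rightarrow> ('e \<Rightarrow> 'x) \<Rightarrow> enat" where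
  "secat_B E pE X pX f = Inf {enat n | n. \<exists>U :: nat \<Rightarrow> 'x set.
       topspace X \<subseteq> (\<Union>i\<le>n. U i) \<and>
       (\<forall>i\<le>n. openin X (U i) \<and>
          (\<exists>s. fibrewise_map (subtopology X (U i)) pX E pE s \<and>
               fibrewise_homotopic (subtopology X (U i)) pX X pX (f \<circ> s) id))}"

text \<open>Fibrewise pointed LS category of X (value \<infinity> if no finite cover exists).\<close>
definition cat_star_B :: "'x topology \<Rightarrow> ('x \<Rightarrow> 'b) \<Rightarrow> ('b \<Rightarrow> 'x) \<Rightarrow> enat" where
  "cat_star_B X pX sX = Inf {enat n | n. \<exists>U :: nat \<Rightarrow> 'x set.
       topspace X \<subseteq> (\<Union>i\<le>n. U i) \<and>
       (\<forall>i\<le>n. openin X (U i) \<and>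
          fibrewise_homotopic (subtopology X (U i)) pX X pX id (sX \<circ> pX))}"

end

theory Submission
  imports Defs
begin

lemma cm_in: "continuous_map X Y f \<Longrightarrow> x \<in> topspace X \<Longrightarrow> f x \<in> topspace Y"
  by (metis continuous_map_image_subset_topspace image_subset_iff)

lemma fh_sym: "fibrewise_homotopic X pX Y pY f g \<Longrightarrow> fibrewise_homotopic X pX Y pY g f"
  unfolding fibrewise_homotopic_def by (rule homotopic_with_symD)

lemma fh_trans: "fibrewise_homotopic X pX Y pY f g \<Longrightarrow> fibrewise_homotopic X pX Y pY g h
  \<Longrightarrow> fibrewise_homotopic X pX Y pY f h"
  unfolding fibrewise_homotopic_def by (rule homotopic_with_trans)

lemma fh_eq:
  assumes "fibrewise_homotopic X pX Y pY f g" "\<And>x. x \<in> topspace X \<Longrightarrow> f' x = f x"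
    "\<And>x. x \<in> topspace X \<Longrightarrow> g' x = g x"
  shows "fibrewise_homotopic X pX Y pY f' g'"
proof -
  let ?P = "\<lambda>k. \<forall>x\<in>topspace X. pY (k x) = pX x"
  have h: "homotopic_with ?P X Y f g" using assms(1) unfolding fibrewise_homotopic_def .
  have cf: "continuous_map X Y f" "continuous_map X Y g" "?P f" "?P g"
    using homotopic_with_imp_continuous_maps[OF h] homotopic_with_imp_property[OF h] by auto
  have cf': "continuous_map X Y f'" using cf(1) continuous_map_eq assms(2) by metis
  have cg': "continuous_map X Y g'" using cf(2) continuous_map_eq assms(3) by metis
  have 1: "homotopic_with ?P X Y f' f"
    by (rule homotopic_with_equal) (use cf cf' assms in auto)
  have 2: "homotopic_with ?P X Y g g'"
    by (rule homotopic_with_equal) (use cf cg' assms in auto)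
  show ?thesis unfolding fibrewise_homotopic_def
    using homotopic_with_trans[OF homotopic_with_trans[OF 1 h] 2] .
qed

lemma fh_left:
  assumes "fibrewise_homotopic X pX Y pY g h" "fibrewise_map Y pY Z pZ k"
  shows "fibrewise_homotopic X pX Z pZ (k \<circ> g) (k \<circ> h)"
proof -
  have H: "homotopic_with (\<lambda>j. continuous_map X Y j \<and> (\<forall>x\<in>topspace X. pY (j x) = pX x)) X Y g h"
  proof (rule homotopic_with_mono[OF assms(1)[unfolded fibrewise_homotopic_def]])
    fix j assume "continuous_map X Y j" "\<forall>x\<in>topspace X. pY (j x) = pX x"
    then show "continuous_map X Y j \<and> (\<forall>x\<in>topspace X. pY (j x) = pX x)" by blast
  qed
  have k: "continuous_map Y Z k" and pk: "\<And>y. y \<in> topspace Y \<Longrightarrow> pZ (k y) = pY y"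
    using assms(2) unfolding fibrewise_map_def by auto
  show ?thesis unfolding fibrewise_homotopic_def
  proof (rule homotopic_with_compose_continuous_map_left[OF H k])
    fix j assume j: "continuous_map X Y j \<and> (\<forall>x\<in>topspace X. pY (j x) = pX x)"
    show "\<forall>x\<in>topspace X. pZ ((k \<circ> j) x) = pX x"
    proof
      fix x assume x: "x \<in> topspace X"
      have jx: "j x \<in> topspace Y" by (rule cm_in[OF conjunct1[OF j] x])
      have "pY (j x) = pX x" using j x by blast
      then show "pZ ((k \<circ> j) x) = pX x" using pk[OF jx] by (simp only: o_def)
    qed
  qed
qed

lemma fh_right:
  assumes "fibrewise_homotopic Y pY Z pZ g h" "fibrewise_map X pX Y pY k"
  shows "fibrewise_homotopic X pX Z pZ (g \<circ> k) (h \<circ> k)"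
proof -
  have H: "homotopic_with (\<lambda>j. \<forall>y\<in>topspace Y. pZ (j y) = pY y) Y Z g h"
    using assms(1) unfolding fibrewise_homotopic_def .
  have k: "continuous_map X Y k" and pk: "\<And>x. x \<in> topspace X \<Longrightarrow> pY (k x) = pX x"
    using assms(2) unfolding fibrewise_map_def by auto
  show ?thesis unfolding fibrewise_homotopic_def
  proof (rule homotopic_with_compose_continuous_map_right[OF H k])
    fix j assume j: "\<forall>y\<in>topspace Y. pZ (j y) = pY y"
    show "\<forall>x\<in>topspace X. pZ ((j \<circ> k) x) = pX x"
    proof
      fix x assume x: "x \<in> topspace X"
      have kx: "k x \<in> topspace Y" by (rule cm_in[OF k x])
      have "pZ (j (k x)) = pY (k x)" using j kx by blast
      then show "pZ ((j \<circ> k) x) = pX x" using pk[OF x] by (simp only: o_def)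
    qed
  qed
qed

theorem proposition2p2:
  fixes B :: "'b topology" and E :: "'e topology" and X :: "'x topology"
    and pE :: "'e \<Rightarrow> 'b" and sE :: "'b \<Rightarrow> 'e"
    and pX :: "'x \<Rightarrow> 'b" and sX :: "'b \<Rightarrow> 'x"
    and f :: "'e \<Rightarrow> 'x"
  assumes "fibrewise_pointed_space B E pE sE"
    and "fibrewise_pointed_space B X pX sX"
    and "fibrewise_pointed_map B E pE sE X pX sX f"
  shows "secat_B E pE X pX f \<le> cat_star_B X pX sX \<and>
         (fibrewise_contractible B E pE \<longrightarrow> secat_B E pE X pX f = cat_star_B X pX sX)"
proof -
  have cpE: "continuous_map E B pE" and csE: "continuous_map B E sE"
    and pEsE: "\<And>b. b \<in> topspace B \<Longrightarrow> pE (sE b) = b"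
    using assms(1) unfolding fibrewise_pointed_space_def fibrewise_space_def by auto
  have cpX: "continuous_map X B pX" and csX: "continuous_map B X sX"
    and pXsX: "\<And>b. b \<in> topspace B \<Longrightarrow> pX (sX b) = b"
    using assms(2) unfolding fibrewise_pointed_space_def fibrewise_space_def by auto
  have cf: "continuous_map E X f" and pXf: "\<And>e. e \<in> topspace E \<Longrightarrow> pX (f e) = pE e"
    and fsE: "\<And>b. b \<in> topspace B \<Longrightarrow> f (sE b) = sX b"
    using assms(3) unfolding fibrewise_pointed_map_def fibrewise_map_def by auto
  have pXB: "\<And>x. x \<in> topspace X \<Longrightarrow> pX x \<in> topspace B"
    using continuous_map_image_subset_topspace[OF cpX] by blast
  have fmf: "fibrewise_map E pE X pX f" using assms(3) unfolding fibrewise_pointed_map_def by auto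
  have fmsE: "fibrewise_map B id E pE sE" unfolding fibrewise_map_def using csE pEsE by auto
  have fmpX: "\<And>U. fibrewise_map (subtopology X U) pX B id pX"
    unfolding fibrewise_map_def using cpX by (auto intro: continuous_map_from_subtopology)
  have sub1: "{enat n | n. \<exists>U :: nat \<Rightarrow> 'x set.
       topspace X \<subseteq> (\<Union>i\<le>n. U i) \<and>
       (\<forall>i\<le>n. openin X (U i) \<and>
          fibrewise_homotopic (subtopology X (U i)) pX X pX id (sX \<circ> pX))}
    \<subseteq> {enat n | n. \<exists>U :: nat \<Rightarrow> 'x set.
       topspace X \<subseteq> (\<Union>i\<le>n. U i) \<and>
       (\<forall>i\<le>n. openin X (U i) \<and>
          (\<exists>s. fibrewise_map (subtopology X (U i)) pX E pE s \<and>
               fibrewise_homotopic (subtopology X (U i)) pX X pX (f \<circ> s) id))}"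
    (is "?A \<subseteq> ?C")
  proof (intro subsetI)
    fix x assume "x \<in> ?A"
    then obtain n U where xn: "x = enat n" and
      cov: "topspace X \<subseteq> (\<Union>i\<le>n. U i)" and H: "\<forall>i\<le>(n::nat). openin X (U i) \<and>
          fibrewise_homotopic (subtopology X (U i)) pX X pX id (sX \<circ> pX)" by blast
    have "\<forall>i\<le>n. openin X (U i) \<and>
          (\<exists>s. fibrewise_map (subtopology X (U i)) pX E pE s \<and>
               fibrewise_homotopic (subtopology X (U i)) pX X pX (f \<circ> s) id)"
    proof (intro allI impI conjI)
      fix i assume i: "i \<le> n"
      show "openin X (U i)" using H i by auto
      have m: "fibrewise_map (subtopology X (U i)) pX E pE (sE \<circ> pX)"
        unfolding fibrewise_map_def
        using continuous_map_compose[OF continuous_map_from_subtopology[OF cpX] csE] pEsE pXB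
        by auto
      have "fibrewise_homotopic (subtopology X (U i)) pX X pX (f \<circ> (sE \<circ> pX)) id"
        by (rule fh_eq[OF fh_sym[OF conjunct2[OF H[rule_format, OF i]]]])
           (auto simp: fsE pXB)
      with m show "\<exists>s. fibrewise_map (subtopology X (U i)) pX E pE s \<and>
               fibrewise_homotopic (subtopology X (U i)) pX X pX (f \<circ> s) id" by blast
    qed
    with cov xn show "x \<in> ?C" by blast
  qed
  have le1: "secat_B E pE X pX f \<le> cat_star_B X pX sX"
    unfolding secat_B_def cat_star_B_def by (rule Inf_superset_mono[OF sub1])
  moreover have "secat_B E pE X pX f = cat_star_B X pX sX" if C: "fibrewise_contractible B E pE"
  proof -
    obtain g h where g: "fibrewise_map E pE B id g" and h: "fibrewise_map B id E pE h"
      and hg: "fibrewise_homotopic E pE E pE (h \<circ> g) id"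
      using C unfolding fibrewise_contractible_def by blast
    have gE: "\<And>e. e \<in> topspace E \<Longrightarrow> g e = pE e" using g unfolding fibrewise_map_def by auto
    have sEB: "\<And>b. b \<in> topspace B \<Longrightarrow> sE b \<in> topspace E"
      using continuous_map_image_subset_topspace[OF csE] by blast
    have hsE: "fibrewise_homotopic B id E pE h sE"
      by (rule fh_eq[OF fh_right[OF hg fmsE]]) (auto simp: gE sEB pEsE)
    have fhsX: "fibrewise_homotopic B id X pX (f \<circ> h) sX"
      by (rule fh_eq[OF fh_left[OF hsE fmf]]) (auto simp: fsE)
    have sub2: "{enat n | n. \<exists>U :: nat \<Rightarrow> 'x set.
       topspace X \<subseteq> (\<Union>i\<le>n. U i) \<and>
       (\<forall>i\<le>n. openin X (U i) \<and>
          (\<exists>s. fibrewise_map (subtopology X (U i)) pX E pE s \<and>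
               fibrewise_homotopic (subtopology X (U i)) pX X pX (f \<circ> s) id))}
      \<subseteq> {enat n | n. \<exists>U :: nat \<Rightarrow> 'x set.
       topspace X \<subseteq> (\<Union>i\<le>n. U i) \<and>
       (\<forall>i\<le>n. openin X (U i) \<and>
          fibrewise_homotopic (subtopology X (U i)) pX X pX id (sX \<circ> pX))}"
      (is "?A \<subseteq> ?C")
    proof (intro subsetI)
      fix x assume "x \<in> ?A"
      then obtain n U where xn: "x = enat n" and
        cov: "topspace X \<subseteq> (\<Union>i\<le>n. U i)" and H: "\<forall>i\<le>(n::nat). openin X (U i) \<and>
          (\<exists>s. fibrewise_map (subtopology X (U i)) pX E pE s \<and>
               fibrewise_homotopic (subtopology X (U i)) pX X pX (f \<circ> s) id)" by blast
      have "\<forall>i\<le>n. openin X (U i) \<and>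
          fibrewise_homotopic (subtopology X (U i)) pX X pX id (sX \<circ> pX)"
      proof (intro allI impI conjI)
        fix i assume i: "i \<le> n"
        show "openin X (U i)" using H i by auto
        obtain s where s: "fibrewise_map (subtopology X (U i)) pX E pE s"
          and fs: "fibrewise_homotopic (subtopology X (U i)) pX X pX (f \<circ> s) id"
          using H i by blast
        have sE': "\<And>x. x \<in> topspace (subtopology X (U i)) \<Longrightarrow> s x \<in> topspace E"
          and psx: "\<And>x. x \<in> topspace (subtopology X (U i)) \<Longrightarrow> pE (s x) = pX x"
          using s unfolding fibrewise_map_def by (auto simp: cm_in)
        have 1: "fibrewise_homotopic (subtopology X (U i)) pX E pE s (h \<circ> pX)"
          by (rule fh_eq[OF fh_sym[OF fh_right[OF hg s]]]) (auto simp: gE sE' psx)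
        have 2: "fibrewise_homotopic (subtopology X (U i)) pX X pX (f \<circ> s) ((f \<circ> h) \<circ> pX)"
          using fh_left[OF 1 fmf] by (simp add: o_assoc)
        have 3: "fibrewise_homotopic (subtopology X (U i)) pX X pX ((f \<circ> h) \<circ> pX) (sX \<circ> pX)"
          using fh_right[OF fhsX fmpX] .
        show "fibrewise_homotopic (subtopology X (U i)) pX X pX id (sX \<circ> pX)"
          using fh_trans[OF fh_trans[OF fh_sym[OF fs] 2] 3] .
      qed
      with cov xn show "x \<in> ?C" by blast
    qed
    have "cat_star_B X pX sX \<le> secat_B E pE X pX f"
      unfolding secat_B_def cat_star_B_def by (rule Inf_superset_mono[OF sub2])
    with le1 show ?thesis by simp
  qed
  ultimately show ?thesis by blast
qed

end
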